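(* Let $n$ be a positive integer and let $S\subseteq V(Q_n)$ be a set of vertices that are pairwise at distance at most $2$ in $Q_n$. Then either (a) $S\subseteq N_{Q_n}[v]$ for some $v\in V(Q_n)$, or (b) $S$ is the vertex set of a $4$-cycle (square) of $Q_n$, or (c) $S$ consists of four vertices forming one of the two partite sets (color classes of the bipartition) of some subgraph of $Q_n$ isomorphic to $Q_3$.
   Context: $Q_n$ is the $n$-dimensional hypercube: vertices are binary $n$-tuples, two being adjacent iff they differ in exactly one coordinate; distance is the graph distance (Hamming distance). $N_{Q_n}[v]$ is the closed neighborhood of $v$ (i.e., $v$ and its neighbors). *)

theory Defs
  imports Main
begin

definition hc_verts :: "nat \<Rightarrow> bool list set" where
  "hc_verts n = {x. length x = n}"

text \<open>Hamming distance (= graph distance in Q_n for tuples of equal length).\<close>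
definition hdist :: "bool list \<Rightarrow> bool list \<Rightarrow> nat" where
  "hdist x y = card {i. i < length x \<and> x ! i \<noteq> y ! i}"

definition hc_adj :: "bool list \<Rightarrow> bool list \<Rightarrow> bool" where
  "hc_adj x y \<longleftrightarrow> hdist x y = 1"

definition hc_closed_nbhd :: "nat \<Rightarrow> bool list \<Rightarrow> bool list set" where
  "hc_closed_nbhd n v = {u \<in> hc_verts n. u = v \<or> hc_adj u v}"

definition hc_square :: "nat \<Rightarrow> bool list set \<Rightarrow> bool" where
  "hc_square n S \<longleftrightarrow> (\<exists>a b c d. a \<in> hc_verts n \<and> b \<in> hc_verts n \<and> c \<in> hc_verts n \<and> d \<in> hc_verts n
     \<and> distinct [a, b, c, d]
     \<and> hc_adj a b \<and> hc_adj b c \<and> hc_adj c d \<and> hc_adj d a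
     \<and> S = {a, b, c, d})"

text \<open>A subgraph of Q_n isomorphic to Q_3 is given by an injective map from V(Q_3) into V(Q_n)
  sending edges of Q_3 to edges of Q_n (the isomorphism onto the subgraph).\<close>
definition hc_Q3_embedding :: "nat \<Rightarrow> (bool list \<Rightarrow> bool list) \<Rightarrow> bool" where
  "hc_Q3_embedding n f \<longleftrightarrow>
     f ` hc_verts 3 \<subseteq> hc_verts n \<and> inj_on f (hc_verts 3) \<and>
     (\<forall>x\<in>hc_verts 3. \<forall>y\<in>hc_verts 3. hc_adj x y \<longrightarrow> hc_adj (f x) (f y))"

text \<open>The two partite sets (colour classes) of Q_3: vertices of even / odd weight.\<close>
definition Q3_part :: "bool \<Rightarrow> bool list set" where
  "Q3_part p = {x \<in> hc_verts 3. even (hdist x (replicate 3 False)) = p}"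

definition hc_Q3_half :: "nat \<Rightarrow> bool list set \<Rightarrow> bool" where
  "hc_Q3_half n S \<longleftrightarrow> card S = 4 \<and>
     (\<exists>f p. hc_Q3_embedding n f \<and> S = f ` Q3_part p)"

end

theory Submission imports Defs begin

definition symd :: "'a set \<Rightarrow> 'a set \<Rightarrow> 'a set" where
  "symd A B = (A - B) \<union> (B - A)"

lemma sd1: "i\<noteq>a \<Longrightarrow> i\<noteq>b \<Longrightarrow> a\<noteq>b \<Longrightarrow> card (symd {i} {a,b}) = 3"
  by (simp add: symd_def insert_Diff_if)

lemma sd2: "a\<noteq>b \<Longrightarrow> c\<noteq>d \<Longrightarrow> a\<notin>{c,d} \<Longrightarrow> b\<notin>{c,d} \<Longrightarrow> card (symd {a,b} {c,d}) = 4"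
proof -
  assume h: "a\<noteq>b" "c\<noteq>d" "a\<notin>{c,d}" "b\<notin>{c,d}"
  then have "symd {a,b} {c,d} = {a,b,c,d}" by (auto simp: symd_def)
  then show ?thesis using h by simp
qed

lemma family:
  fixes F :: "nat set set"
  assumes e: "{} \<in> F" and fin: "\<forall>A\<in>F. finite A"
    and d: "\<forall>A\<in>F. \<forall>B\<in>F. card (symd A B) \<le> 2"
  shows "(\<exists>C. C \<subseteq> \<Union>F \<and> (\<forall>A\<in>F. card (symd A C) \<le> 1))
    \<or> (\<exists>i j. i\<noteq>j \<and> F = {{},{i},{j},{i,j}})
    \<or> (\<exists>i j k. i\<noteq>j \<and> j\<noteq>k \<and> i\<noteq>k \<and> F = {{},{i,j},{j,k},{i,k}})"
proof -
  have sz: "A = {} \<or> (\<exists>a. A={a}) \<or> (\<exists>a b. a\<noteq>b \<and> A={a,b})" if "A \<in> F" for A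
  proof -
    have "card A \<le> 2" using d e that by (metis Diff_empty Un_empty_right empty_Diff symd_def)
    moreover have "finite A" using fin that by blast
    ultimately have "card A = 0 \<or> card A = 1 \<or> card A = 2" by linarith
    then show ?thesis using \<open>finite A\<close> by (auto simp: card_1_singleton_iff card_2_iff)
  qed
  have ps: "i = a \<or> i = b" if "{i} \<in> F" "{a,b} \<in> F" "a \<noteq> b" for i a b
    using sd1[of i a b] d that by fastforce
  have pp: "{a,b} \<inter> {c,d} \<noteq> {}" if "{a,b} \<in> F" "{c,d} \<in> F" "a \<noteq> b" "c\<noteq>d" for a b c d
  proof
    assume "{a,b} \<inter> {c,d} = {}"
    then have "card (symd {a,b} {c,d}) = 4" using sd2[of a b c d] that by auto
    then show False using d that by fastforce
  qed
  show ?thesis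
  proof (cases "\<forall>A\<in>F. A = {} \<or> (\<exists>a. A={a})")
    case True
    have "\<forall>A\<in>F. card (symd A {}) \<le> 1" using True by (auto simp: symd_def)
    then show ?thesis by blast
  next
    case False
    then obtain p q where pq: "p \<noteq> q" "{p,q} \<in> F" using sz by blast
    show ?thesis
    proof (cases "\<exists>i. {i} \<in> F")
      case True
      then obtain i where i: "{i} \<in> F" by blast
      show ?thesis
      proof (cases "\<exists>j. j \<noteq> i \<and> {j} \<in> F")
        case True
        then obtain j where j: "j \<noteq> i" "{j} \<in> F" by blast
        have ij: "{p,q} = {i,j}" using ps[OF i pq(2) pq(1)] ps[OF j(2) pq(2) pq(1)] j(1) by auto
        have "F = {{},{i},{j},{i,j}}"
        proof
          show "{{},{i},{j},{i,j}} \<subseteq> F" using e i j pq ij by auto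
        next
          show "F \<subseteq> {{},{i},{j},{i,j}}"
          proof
            fix A assume A: "A \<in> F"
            from sz[OF A] show "A \<in> {{},{i},{j},{i,j}}"
            proof (elim disjE exE conjE)
              fix a assume "A = {a}" then show ?thesis
                using ps[of a p q] A pq ij by auto
            next
              fix a b assume "a \<noteq> b" "A = {a,b}" then show ?thesis
                using ps[OF i, of a b] ps[OF j(2), of a b] A j(1) by auto
            qed simp
          qed
        qed
        then show ?thesis using j(1) by blast
      next
        case False
        have "\<forall>A\<in>F. card (symd A {i}) \<le> 1"
        proof
          fix A assume A: "A \<in> F"
          from sz[OF A] show "card (symd A {i}) \<le> 1"
          proof (elim disjE exE conjE)
            fix a assume "A = {a}" then show ?thesis
              using False A by (cases "a = i") (auto simp: symd_def)
          next
            fix a b assume "a \<noteq> b" "A = {a,b}" then show ?thesis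
              using ps[OF i, of a b] A by (auto simp: symd_def insert_Diff_if)
          qed (simp add: symd_def)
        qed
        moreover have "{i} \<subseteq> \<Union>F" using i by blast
        ultimately show ?thesis by blast
      qed
    next
      case nosing: False
      have pr: "\<exists>a b. a\<noteq>b \<and> A={a,b}" if "A \<in> F" "A \<noteq> {}" for A
        using sz[OF that(1)] that nosing by blast
      have star: "\<forall>A\<in>F. card (symd A {x}) \<le> 1" if "\<forall>A\<in>F. A \<noteq> {} \<longrightarrow> x \<in> A" for x
      proof
        fix A assume A: "A \<in> F"
        show "card (symd A {x}) \<le> 1"
        proof (cases "A = {}")
          case True then show ?thesis by (simp add: symd_def)
        next
          case False
          then obtain a b where "a \<noteq> b" "A = {a,b}" using pr A by blast
          then show ?thesis using that A False by (auto simp: symd_def insert_Diff_if)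
        qed
      qed
      show ?thesis
      proof (cases "\<forall>A\<in>F. A \<noteq> {} \<longrightarrow> p \<in> A")
        case True
        have "{p} \<subseteq> \<Union>F" using pq(2) by blast
        then show ?thesis using star[OF True] by (intro disjI1 exI[of _ "{p}"]) simp
      next
        case np: False
        show ?thesis
        proof (cases "\<forall>A\<in>F. A \<noteq> {} \<longrightarrow> q \<in> A")
          case True
          have "{q} \<subseteq> \<Union>F" using pq(2) by blast
        then show ?thesis using star[OF True] by (intro disjI1 exI[of _ "{q}"]) simp
        next
          case nq: False
          obtain B1 where B1: "B1 \<in> F" "B1 \<noteq> {}" "p \<notin> B1" using np by blast
          obtain B2 where B2: "B2 \<in> F" "B2 \<noteq> {}" "q \<notin> B2" using nq by blast
          obtain a1 b1 where ab1: "a1 \<noteq> b1" "B1 = {a1,b1}" using pr B1 by blast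
          obtain a2 b2 where ab2: "a2 \<noteq> b2" "B2 = {a2,b2}" using pr B2 by blast
          obtain r where r: "B1 = {q,r}" "r \<noteq> q" "r \<noteq> p"
            using pp[of a1 b1 p q] ab1 B1 pq by auto
          obtain s where s: "B2 = {p,s}" "s \<noteq> p" "s \<noteq> q"
            using pp[of a2 b2 p q] ab2 B2 pq by auto
          have rs: "r = s" using pp[of q r p s] r s B1 B2 by auto
          have "F = {{},{p,q},{q,r},{p,r}}"
          proof
            show "{{},{p,q},{q,r},{p,r}} \<subseteq> F" using e pq B1 B2 r s rs by auto
          next
            show "F \<subseteq> {{},{p,q},{q,r},{p,r}}"
            proof
              fix A assume A: "A \<in> F"
              show "A \<in> {{},{p,q},{q,r},{p,r}}"
              proof (cases "A = {}")
                case False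
                then obtain a b where ab: "a \<noteq> b" "A = {a,b}" using pr A by blast
                have "{a,b} \<inter> {p,q} \<noteq> {}" "{a,b} \<inter> {q,r} \<noteq> {}" "{a,b} \<inter> {p,r} \<noteq> {}"
                  using pp[of a b p q] pp[of a b q r] pp[of a b p r] ab A pq B1 B2 r s rs by auto
                then have i1: "a \<in> {p,q} \<or> b \<in> {p,q}" "a \<in> {q,r} \<or> b \<in> {q,r}" "a \<in> {p,r} \<or> b \<in> {p,r}"
                  by blast+
                have aT: "a = p \<or> a = q \<or> a = r"
                proof (rule ccontr)
                  assume "\<not> (a = p \<or> a = q \<or> a = r)"
                  then have "b \<in> {p,q}" "b \<in> {q,r}" "b \<in> {p,r}" using i1 by auto
                  then show False using pq r by auto
                qed
                have bT: "b = p \<or> b = q \<or> b = r"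
                proof (rule ccontr)
                  assume "\<not> (b = p \<or> b = q \<or> b = r)"
                  then have "a \<in> {p,q}" "a \<in> {q,r}" "a \<in> {p,r}" using i1 by auto
                  then show False using pq r by auto
                qed
                show ?thesis unfolding ab(2) using aT bT ab(1)
                  by (elim disjE) (simp_all add: insert_commute)
              qed simp
            qed
          qed
          then have H: "p \<noteq> q \<and> q \<noteq> r \<and> p \<noteq> r \<and> F = {{},{p,q},{q,r},{p,r}}" using pq r by simp
          show ?thesis by (intro disjI2 exI[of _ p] exI[of _ q] exI[of _ r]) (fact H)
        qed
      qed
    qed
  qed
qed


definition Dset :: "bool list \<Rightarrow> bool list \<Rightarrow> nat set" where
  "Dset x y = {i. i < length x \<and> x!i \<noteq> y!i}"

definition tog :: "bool list \<Rightarrow> nat set \<Rightarrow> bool list" where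
  "tog x A = map (\<lambda>i. if i \<in> A then \<not> x!i else x!i) [0..<length x]"

lemma hdist_D: "hdist x y = card (Dset x y)" by (simp add: hdist_def Dset_def)

lemma len_tog[simp]: "length (tog x A) = length x" by (simp add: tog_def)

lemma D_tog: "Dset x (tog x A) = A \<inter> {..<length x}"
  by (auto simp: Dset_def tog_def)

lemma tog_D: "length y = length x \<Longrightarrow> tog x (Dset x y) = y"
  by (auto simp: Dset_def tog_def intro!: nth_equalityI)

lemma D_fin: "finite (Dset x y)" by (simp add: Dset_def)

lemma D_sub: "Dset x y \<subseteq> {..<length x}" by (auto simp: Dset_def)

lemma D_tri: "length y = length x \<Longrightarrow> length z = length x \<Longrightarrow>
   Dset y z = symd (Dset x y) (Dset x z)"
  by (auto simp: Dset_def symd_def)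

lemma hdist_tog: "hdist (tog x A) (tog x B) = card (symd A B \<inter> {..<length x})"
proof -
  have "Dset (tog x A) (tog x B) = symd (A \<inter> {..<length x}) (B \<inter> {..<length x})"
    using D_tri[of "tog x A" x "tog x B"] by (simp add: D_tog)
  also have "\<dots> = symd A B \<inter> {..<length x}" by (auto simp: symd_def)
  finally show ?thesis by (simp add: hdist_D)
qed

lemma tog_inj: "A \<subseteq> {..<length x} \<Longrightarrow> B \<subseteq> {..<length x} \<Longrightarrow> tog x A = tog x B \<Longrightarrow> A = B"
proof -
  assume a: "A \<subseteq> {..<length x}" "B \<subseteq> {..<length x}" "tog x A = tog x B"
  have "A = Dset x (tog x A)" using a(1) by (simp add: D_tog Int_absorb2)
  also have "\<dots> = Dset x (tog x B)" using a(3) by simp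
  also have "\<dots> = B" using a(2) by (simp add: D_tog Int_absorb2)
  finally show ?thesis .
qed

lemma hdist0: "length x = length y \<Longrightarrow> hdist x y = 0 \<Longrightarrow> x = y"
proof -
  assume a: "length x = length y" "hdist x y = 0"
  have "Dset x y = {}" using a(2) D_fin[of x y] by (simp add: hdist_D)
  then show ?thesis using a(1) by (auto simp: Dset_def intro!: nth_equalityI)
qed


definition Eset :: "bool list \<Rightarrow> nat set" where
  "Eset y = {m. m < length y \<and> y!m}"

lemma lt3: "(m::nat) < 3 \<longleftrightarrow> m = 0 \<or> m = 1 \<or> m = 2" by auto

lemma Eset3: "Eset [a,b,c] = (if a then {0} else {}) \<union> (if b then {1} else {}) \<union> (if c then {2} else {})"
  by (auto simp: Eset_def less_Suc_eq numeral_3_eq_3 nth_Cons')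

lemma D_E: "length y = length z \<Longrightarrow> Dset y z = symd (Eset y) (Eset z)"
  by (auto simp: Dset_def Eset_def symd_def)

lemma len3: "length x = 3 \<Longrightarrow> \<exists>a b c. x = [a,b,c]"
  by (auto simp: numeral_3_eq_3 length_Suc_conv)

lemma hdist_Cons: "length x = length y \<Longrightarrow> hdist (a#x) (b#y) = (if a = b then 0 else 1) + hdist x y"
proof -
  assume l: "length x = length y"
  have "Dset (a#x) (b#y) = (if a = b then {} else {0}) \<union> Suc ` Dset x y"
  proof (rule set_eqI)
    fix i show "i \<in> Dset (a#x) (b#y) \<longleftrightarrow> i \<in> (if a = b then {} else {0}) \<union> Suc ` Dset x y"
    proof (cases i)
      case 0 then show ?thesis by (auto simp: Dset_def)
    next
      case (Suc j)
      have "Suc j \<in> Suc ` Dset x y \<longleftrightarrow> j \<in> Dset x y" by blast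
      then show ?thesis using Suc by (simp add: Dset_def)
    qed
  qed
  then show ?thesis by (simp add: hdist_D card_image D_fin)
qed

lemma hdist_Nil: "hdist [] [] = 0" by (simp add: hdist_def)

lemma Q3T: "Q3_part True = {[False,False,False],[True,True,False],[False,True,True],[True,False,True]}"
proof -
  have "x \<in> Q3_part True \<longleftrightarrow> x \<in> {[False,False,False],[True,True,False],[False,True,True],[True,False,True]}" for x
  proof (cases "length x = 3")
    case True
    then obtain a b c where "x = [a,b,c]" using len3 by blast
    then show ?thesis by (cases a; cases b; cases c) (simp_all add: Q3_part_def hc_verts_def hdist_Cons hdist_Nil numeral_3_eq_3)
  next
    case False then show ?thesis by (auto simp: Q3_part_def hc_verts_def)
  qed
  then show ?thesis by blast
qed


lemma q3_embed:
  assumes ijk: "i \<noteq> j" "j \<noteq> k" "i \<noteq> k" and lt: "i < length x0" "j < length x0" "k < length x0"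
  defines "g \<equiv> (\<lambda>m. [i,j,k]!m)"
  defines "f \<equiv> (\<lambda>y. tog x0 (g ` Eset y))"
  shows "hc_Q3_embedding (length x0) f"
    and "f ` Q3_part True = {tog x0 {}, tog x0 {i,j}, tog x0 {j,k}, tog x0 {i,k}}"
proof -
  have ginj: "inj_on g {..<3}"
    using ijk by (auto simp: inj_on_def g_def less_Suc_eq numeral_3_eq_3)
  have Esub: "y \<in> hc_verts 3 \<Longrightarrow> Eset y \<subseteq> {..<3}" for y
    by (auto simp: Eset_def hc_verts_def)
  have gsub: "g ` {..<3} \<subseteq> {..<length x0}"
    using lt by (auto simp: g_def less_Suc_eq numeral_3_eq_3)
  have fsub: "y \<in> hc_verts 3 \<Longrightarrow> g ` Eset y \<subseteq> {..<length x0}" for y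
    using Esub gsub by blast
  have hd: "hdist (f y) (f z) = hdist y z" if y: "y \<in> hc_verts 3" and z: "z \<in> hc_verts 3" for y z
  proof -
    have "hdist (f y) (f z) = card (symd (g ` Eset y) (g ` Eset z) \<inter> {..<length x0})"
      by (simp add: f_def hdist_tog)
    also have "symd (g ` Eset y) (g ` Eset z) \<inter> {..<length x0} = symd (g ` Eset y) (g ` Eset z)"
    proof -
      have "symd (g ` Eset y) (g ` Eset z) \<subseteq> {..<length x0}"
        using fsub[OF y] fsub[OF z] unfolding symd_def by blast
      then show ?thesis by (rule Int_absorb2)
    qed
    also have "symd (g ` Eset y) (g ` Eset z) = g ` symd (Eset y) (Eset z)"
    proof -
      have "g ` (Eset y - Eset z) = g ` Eset y - g ` Eset z"
        by (rule inj_on_image_set_diff[OF ginj]) (use Esub[OF y] Esub[OF z] in blast)+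
      moreover have "g ` (Eset z - Eset y) = g ` Eset z - g ` Eset y"
        by (rule inj_on_image_set_diff[OF ginj]) (use Esub[OF y] Esub[OF z] in blast)+
      ultimately show ?thesis unfolding symd_def image_Un by simp
    qed
    also have "card (g ` symd (Eset y) (Eset z)) = card (symd (Eset y) (Eset z))"
    proof (rule card_image)
      have "symd (Eset y) (Eset z) \<subseteq> {..<3}" using Esub[OF y] Esub[OF z] unfolding symd_def by blast
      then show "inj_on g (symd (Eset y) (Eset z))" using ginj inj_on_subset by blast
    qed
    also have "\<dots> = hdist y z" using y z by (simp add: hdist_D D_E hc_verts_def)
    finally show ?thesis .
  qed
  show "hc_Q3_embedding (length x0) f"
    unfolding hc_Q3_embedding_def
  proof (intro conjI ballI impI)
    show "f ` hc_verts 3 \<subseteq> hc_verts (length x0)" by (auto simp: f_def hc_verts_def)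
  next
    show "inj_on f (hc_verts 3)"
    proof (rule inj_onI)
      fix y z assume y: "y \<in> hc_verts 3" and z: "z \<in> hc_verts 3" and e: "f y = f z"
      have "hdist y z = 0" using hd[OF y z] e by (simp add: hdist_def)
      then show "y = z" using hdist0 y z by (simp add: hc_verts_def)
    qed
  next
    fix y z assume "y \<in> hc_verts 3" "z \<in> hc_verts 3" "hc_adj y z"
    then show "hc_adj (f y) (f z)" using hd by (simp add: hc_adj_def)
  qed
  show "f ` Q3_part True = {tog x0 {}, tog x0 {i,j}, tog x0 {j,k}, tog x0 {i,k}}"
  proof -
    have e1: "g ` Eset [False,False,False] = {}" by (simp add: Eset3)
    have e2: "g ` Eset [True,True,False] = {i,j}" by (auto simp: Eset3 g_def)
    have e3: "g ` Eset [False,True,True] = {j,k}" by (auto simp: Eset3 g_def)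
    have e4: "g ` Eset [True,False,True] = {i,k}" by (auto simp: Eset3 g_def)
    show ?thesis unfolding Q3T image_insert image_empty f_def e1 e2 e3 e4 by simp
  qed
qed


theorem proposition6p4:
  fixes n :: nat and S :: "bool list set"
  assumes "0 < n"
    and "S \<subseteq> hc_verts n"
    and "\<forall>x\<in>S. \<forall>y\<in>S. hdist x y \<le> 2"
  shows "(\<exists>v\<in>hc_verts n. S \<subseteq> hc_closed_nbhd n v) \<or> hc_square n S \<or> hc_Q3_half n S"
proof (cases "S = {}")
  case True
  have "replicate n False \<in> hc_verts n" by (simp add: hc_verts_def)
  then show ?thesis using True by blast
next
  case False
  then obtain x0 where x0: "x0 \<in> S" by blast
  have lx0: "length x0 = n" using x0 assms(2) by (auto simp: hc_verts_def)
  have len: "u \<in> S \<Longrightarrow> length u = n" for u using assms(2) by (auto simp: hc_verts_def)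
  define F where "F = Dset x0 ` S"
  have SF: "S = tog x0 ` F"
    unfolding F_def image_image using tog_D len lx0 by (simp add: image_cong)
  have Fsub: "\<Union>F \<subseteq> {..<n}" using D_sub lx0 by (auto simp: F_def)
  have dd: "hdist u w = card (symd (Dset x0 u) (Dset x0 w))" if "u \<in> S" "w \<in> S" for u w
    using D_tri[of u x0 w] len that lx0 by (simp add: hdist_D)
  have fam: "{} \<in> F" "\<forall>A\<in>F. finite A" "\<forall>A\<in>F. \<forall>B\<in>F. card (symd A B) \<le> 2"
    using x0 dd assms(3) D_fin by (auto simp: F_def Dset_def)
  have tinj: "inj_on (tog x0) F" using tog_inj Fsub lx0 by (meson Sup_le_iff inj_onI)
  have t0: "tog x0 {} = x0" by (simp add: tog_def map_nth)
  have htog: "hdist (tog x0 A) (tog x0 B) = card (symd A B)" if "A \<subseteq> {..<n}" "B \<subseteq> {..<n}" for A B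
    using that hdist_tog[of x0 A B] lx0
    by (metis Int_absorb2 Un_least symd_def Diff_subset subset_trans)
  from family[OF fam] show ?thesis
  proof (elim disjE exE conjE)
    fix C assume C: "C \<subseteq> \<Union>F" "\<forall>A\<in>F. card (symd A C) \<le> 1"
    have Cn: "C \<subseteq> {..<n}" using C Fsub by blast
    have "S \<subseteq> hc_closed_nbhd n (tog x0 C)"
    proof
      fix u assume u: "u \<in> S"
      have "hdist u (tog x0 C) = card (symd (Dset x0 u) C)"
        using D_tri[of u x0 "tog x0 C"] len[OF u] lx0 Cn by (simp add: hdist_D D_tog Int_absorb2)
      also have "\<dots> \<le> 1" using C u by (auto simp: F_def)
      finally have "hdist u (tog x0 C) = 0 \<or> hdist u (tog x0 C) = 1" by linarith
      then show "u \<in> hc_closed_nbhd n (tog x0 C)"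
        using hdist0[of u "tog x0 C"] len[OF u] lx0 assms(2) u
        by (auto simp: hc_closed_nbhd_def hc_adj_def)
    qed
    moreover have "tog x0 C \<in> hc_verts n" using lx0 by (simp add: hc_verts_def)
    ultimately show ?thesis by blast
  next
    fix i j assume ij: "i \<noteq> j" "F = {{},{i},{j},{i,j}}"
    have ijn: "i < n" "j < n" using Fsub ij by auto
    have sub: "{} \<subseteq> {..<n}" "{i} \<subseteq> {..<n}" "{j} \<subseteq> {..<n}" "{i,j} \<subseteq> {..<n}" using ijn by auto
    have ne: "tog x0 A \<noteq> tog x0 B" if "A \<subseteq> {..<n}" "B \<subseteq> {..<n}" "A \<noteq> B" for A B
      using tog_inj that lx0 by metis
    have "hc_square n S"
      unfolding hc_square_def
      apply (rule exI[of _ "tog x0 {}"], rule exI[of _ "tog x0 {i}"], rule exI[of _ "tog x0 {i,j}"], rule exI[of _ "tog x0 {j}"])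
      using ne[OF sub(1) sub(2)] ne[OF sub(1) sub(3)] ne[OF sub(1) sub(4)] ne[OF sub(2) sub(3)]
        ne[OF sub(2) sub(4)] ne[OF sub(3) sub(4)] ij lx0
        htog[OF sub(1) sub(2)] htog[OF sub(2) sub(4)] htog[OF sub(4) sub(3)] htog[OF sub(3) sub(1)]
      by (auto simp: hc_verts_def hc_adj_def SF symd_def insert_Diff_if)
    then show ?thesis by blast
  next
    fix i j k assume ijk: "i \<noteq> j" "j \<noteq> k" "i \<noteq> k" "F = {{},{i,j},{j,k},{i,k}}"
    have ijn: "i < length x0" "j < length x0" "k < length x0" using Fsub ijk lx0 by auto
    have "card F = 4" using ijk by (auto simp: doubleton_eq_iff)
    then have c4: "card S = 4" using SF tinj card_image by metis
    have "S = {tog x0 {}, tog x0 {i,j}, tog x0 {j,k}, tog x0 {i,k}}" using SF ijk by simp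
    then have "hc_Q3_half n S"
      unfolding hc_Q3_half_def using c4 q3_embed[OF ijk(1-3) ijn] lx0 by metis
    then show ?thesis by blast
  qed
qed

end
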